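(* Let $p$ be an odd prime with $p\equiv 1\pmod 4$, and let $B$ be a perfect $B[-1,3](p)$ set. If $i\in B$, then $i\cdot\langle -\tfrac32\rangle\subseteq B$, where $\langle -\tfrac32\rangle$ denotes the subgroup of $\mathbb{Z}_p^\ast$ generated by $-3\cdot 2^{-1}\bmod p$.
   Context: $\mathbb{Z}_p^\ast$ is the multiplicative group of nonzero residues modulo $p$. A set $B\subseteq\mathbb{Z}_p$ is a perfect $B[-1,3](p)$ set if every nonzero element of $\mathbb{Z}_p$ has a unique representation $ab \bmod p$ with $a\in\{-1,1,2,3\}$ and $b\in B$ (and $0$ has no such representation); equivalently $B\subseteq\mathbb{Z}_p^\ast$, $|B|=(p-1)/4$, and the sets $\{-b,b,2b,3b\}$, $b\in B$, partition $\mathbb{Z}_p^\ast$. *)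

theory Defs
  imports "HOL-Number_Theory.Number_Theory"
begin

text \<open>Residues modulo p are represented by integers in {0..<p}.\<close>

definition perfect_B_m1_3 :: "int \<Rightarrow> int set \<Rightarrow> bool" where
  "perfect_B_m1_3 p B \<longleftrightarrow>
     B \<subseteq> {0..<p} \<and>
     (\<forall>x\<in>{1..<p}. \<exists>!(a, b). a \<in> {-1, 1, 2, 3} \<and> b \<in> B \<and> (a * b) mod p = x) \<and>
     (\<forall>a\<in>{-1, 1, 2, 3}. \<forall>b\<in>B. (a * b) mod p \<noteq> 0)"

definition minus_three_halves :: "int \<Rightarrow> int" where
  "minus_three_halves p = (THE g. g \<in> {0..<p} \<and> [2 * g = -3] (mod p))"

text \<open>Subgroup of Z_p^* generated by g (in a finite group: the set of powers of g).\<close>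
definition gen_subgroup :: "int \<Rightarrow> int \<Rightarrow> int set" where
  "gen_subgroup p g = {(g ^ k) mod p | k. k \<in> (UNIV :: nat set)}"

end

theory Submission
  imports Defs
begin

lemma pB1: "perfect_B_m1_3 p B \<Longrightarrow> B \<subseteq> {0..<p}"
  unfolding perfect_B_m1_3_def by (erule conjE)

lemma pB2: "perfect_B_m1_3 p B \<Longrightarrow> x \<in> {1..<p} \<Longrightarrow> \<exists>!(a, b). a \<in> {-1, 1, 2, 3} \<and> b \<in> B \<and> (a * b) mod p = x"
  unfolding perfect_B_m1_3_def by (elim conjE) (erule bspec)

lemma pB3: "perfect_B_m1_3 p B \<Longrightarrow> a\<in>{-1,1,2,3} \<Longrightarrow> b\<in>B \<Longrightarrow> (a*b) mod p \<noteq> 0"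
  unfolding perfect_B_m1_3_def by (elim conjE) (drule bspec, assumption, drule bspec, assumption, assumption)

lemma uniq_rep:
  assumes "perfect_B_m1_3 p B" "x \<in> {1..<p}"
    "a \<in> {-1,1,2,3}" "b \<in> B" "(a*b) mod p = x"
    "a' \<in> {-1,1,2,3}" "b' \<in> B" "(a'*b') mod p = x"
  shows "a = a' \<and> b = b'"
proof -
  have "\<exists>!(a, b). a \<in> {-1, 1, 2, 3} \<and> b \<in> B \<and> (a * b) mod p = x"
    using assms(1,2) by (rule pB2)
  then obtain q where q: "\<And>y. (case y of (a, b) \<Rightarrow> a \<in> {-1, 1, 2, 3} \<and> b \<in> B \<and> (a * b) mod p = x) \<Longrightarrow> y = q"
    by (metis (no_types, lifting) ex1E)
  have "(a,b) = q" by (rule q) (insert assms(3-5), simp)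
  moreover have "(a',b') = q" by (rule q) (insert assms(6-8), simp)
  ultimately show ?thesis by (metis prod.inject)
qed

lemma step:
  fixes p :: int
  assumes pr: "prime p" and od: "odd p" and p4: "[p = 1] (mod 4)"
    and perf: "perfect_B_m1_3 p B" and iB: "i \<in> B"
    and g: "[2 * g = -3] (mod p)"
  shows "(g * i) mod p \<in> B"
proof -
  have Bsub: "B \<subseteq> {0..<p}" using perf by (rule pB1)
  have nz: "\<And>a b. a\<in>{-1,1,2,3} \<Longrightarrow> b\<in>B \<Longrightarrow> (a*b) mod p \<noteq> 0"
    using perf by (rule pB3)
  have p1: "p > 1" using pr prime_gt_1_int by blast
  have p3: "p \<noteq> 3" using p4 by (auto simp: cong_def)
  have cop2: "coprime 2 p" 
    proof -
    have "\<not> p dvd 2"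
    proof
      assume "p dvd 2" then have "p \<le> 2" by (simp add: zdvd_imp_le)
      then have "p = 2" using p1 by auto
      then show False using od by simp
    qed
    then show ?thesis using pr by (metis coprime_commute prime_imp_coprime_int)
  qed
  have cop3: "coprime 3 p"
  proof -
    have "\<not> p dvd 3"
    proof
      assume "p dvd 3"
      then have "p \<le> 3" by (simp add: zdvd_imp_le)
      moreover have "p \<noteq> 2" using od by auto
      ultimately show False using p1 p3 by auto
    qed
    then show ?thesis using pr by (metis coprime_commute prime_imp_coprime_int)
  qed
  have i0: "i \<in> {0..<p}" using iB Bsub by auto
  have inz: "i mod p \<noteq> 0" using nz[of 1 i] iB by simp
  define x where "x = (-3 * i) mod p"
  have xnz: "x \<noteq> 0"
  proof
    assume "x = 0"
    then have "p dvd 3 * i" unfolding x_def by (metis dvd_minus_iff mod_0_imp_dvd mult_minus_left)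
    then have "p dvd i" using cop3 by (metis coprime_commute coprime_dvd_mult_right_iff)
    then show False using inz by (simp add: dvd_eq_mod_eq_0)
  qed
  have x1: "x \<in> {1..<p}" proof -
    have "x \<ge> 0" "x < p" using p1 unfolding x_def by auto
    then show ?thesis using xnz by auto
  qed
  have "\<exists>!(a, b). a \<in> {-1, 1, 2, 3} \<and> b \<in> B \<and> (a * b) mod p = x"
    using perf x1 by (rule pB2)
  then obtain a b where ab: "a \<in> {-1,1,2,3}" "b \<in> B" "(a*b) mod p = x" by auto
  have abc: "[a*b = -3*i] (mod p)" using ab(3) unfolding x_def cong_def by simp
  have b0: "b \<in> {0..<p}" using ab(2) Bsub by auto
  have a2: "a = 2"
  proof (rule ccontr)
    assume na: "a \<noteq> 2"
    have i3: "(3*i) mod p \<in> {1..<p}"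
      proof -
      have "(3*i) mod p \<ge> 0" "(3*i) mod p < p" using p1 by auto
      then show ?thesis using nz[of 3 i] iB by auto
    qed
    show False
    proof -
      consider "a = -1" | "a = 1" | "a = 3" using ab(1) na by auto
      then show False
      proof cases
        case 1
        then have "[b = 3*i] (mod p)" using abc
          by (metis cong_minus_minus_iff mult_minus_left mult_1 )
        then have "(1*b) mod p = (3*i) mod p" by (simp add: cong_def)
        then show False using uniq_rep[OF perf i3, of 3 i 1 b] iB ab(2) by auto
      next
        case 2
        then have "[b = -3*i] (mod p)" using abc by simp
        then have "((-1)*b) mod p = (3*i) mod p"
          using cong_minus_minus_iff[of b "-3*i" p] by (simp add: cong_def)
        then show False using uniq_rep[OF perf i3, of 3 i "-1" b] iB ab(2) by auto
      next
        case 3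
        then have "[3*b = 3*(-i)] (mod p)" using abc by simp
        then have "[b = -i] (mod p)" using cop3 cong_mult_lcancel by blast
        then have "((-1)*b) mod p = i mod p"
          using cong_minus_minus_iff[of b "-i" p] by (simp add: cong_def)
        moreover have "i mod p = i" using i0 by simp
        moreover have "i \<in> {1..<p}" using i0 inz by auto
        ultimately show False using uniq_rep[OF perf, of i 1 i "-1" b] iB ab(2) by auto
      qed
    qed
  qed
  have "[2*b = 2*(g*i)] (mod p)"
  proof -
    have "[2*(g*i) = (2*g)*i] (mod p)" by (simp add: ac_simps)
    moreover have "[(2*g)*i = -3*i] (mod p)" using g by (rule cong_scalar_right)
    ultimately show ?thesis using abc a2 by (meson cong_sym cong_trans)
  qed
  then have "[b = g*i] (mod p)" using cop2 cong_mult_lcancel by blast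
  then have "b = (g*i) mod p" using b0 by (simp add: cong_def)
  then show ?thesis using ab(2) by simp
qed

theorem theorem4p3:
  fixes p :: int and B :: "int set" and i :: int
  assumes "prime p" and "odd p" and "[p = 1] (mod 4)"
    and "perfect_B_m1_3 p B"
    and "i \<in> B"
  shows "{(i * h) mod p | h. h \<in> gen_subgroup p (minus_three_halves p)} \<subseteq> B"
proof -
  let ?g = "minus_three_halves p"
  have p1: "p > 1" using assms(1) prime_gt_1_int by blast
  have cop2: "coprime 2 p" 
    proof -
    have "\<not> p dvd 2"
    proof
      assume "p dvd 2" then have "p \<le> 2" by (simp add: zdvd_imp_le)
      then have "p = 2" using p1 by auto
      then show False using assms(2) by simp
    qed
    then show ?thesis using assms(1) by (metis coprime_commute prime_imp_coprime_int)
  qed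
  define g0 where "g0 = (-3 * ((p+1) div 2)) mod p"
  have g0: "g0 \<in> {0..<p} \<and> [2 * g0 = -3] (mod p)"
  proof -
    have "2 * ((p+1) div 2) = p + 1" using assms(2) by (metis dvd_mult_div_cancel odd_even_add odd_one)
    then have "[2*g0 = -3*(p+1)] (mod p)" unfolding g0_def cong_def
      by (metis mod_mult_right_eq mult.left_commute)
    moreover have "[-3*(p+1) = -3] (mod p)"
    proof -
      have "-3*(p+1) = -3 + (-3)*p" by simp
      then show ?thesis unfolding cong_def by (metis mod_mult_self1)
    qed
    ultimately have "[2*g0 = -3] (mod p)" by (rule cong_trans)
    then show ?thesis unfolding g0_def using p1 by simp
  qed
  have ex: "\<exists>!g. g \<in> {0..<p} \<and> [2 * g = -3] (mod p)"
  proof (rule ex1I[of _ g0])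
    show "g0 \<in> {0..<p} \<and> [2 * g0 = -3] (mod p)" by (rule g0)
  next
    fix g assume g: "g \<in> {0..<p} \<and> [2 * g = -3] (mod p)"
    then have "[2*g = 2*g0] (mod p)" using g0 by (meson cong_sym cong_trans)
    then have "[g = g0] (mod p)" using cop2 cong_mult_lcancel by blast
    then show "g = g0" using g g0 by (simp add: cong_def)
  qed
  have gg: "[2 * ?g = -3] (mod p)"
    using theI'[OF ex] unfolding minus_three_halves_def by blast
  have pw: "(i * ?g ^ k) mod p \<in> B" for k
  proof (induction k)
    case 0
    have "B \<subseteq> {0..<p}" using assms(4) by (rule pB1)
    then show ?case using assms(5) by auto
  next
    case (Suc k)
    have "(?g * ((i * ?g ^ k) mod p)) mod p \<in> B"
      by (rule step[OF assms(1-4) Suc gg])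
    moreover have "(?g * ((i * ?g ^ k) mod p)) mod p = (i * ?g ^ Suc k) mod p"
      by (metis mod_mult_right_eq mult.left_commute power_Suc)
    ultimately show ?case by simp
  qed
  show ?thesis
  proof
    fix y assume "y \<in> {(i * h) mod p | h. h \<in> gen_subgroup p ?g}"
    then obtain k where "y = (i * (?g ^ k mod p)) mod p" unfolding gen_subgroup_def by auto
    then have "y = (i * ?g ^ k) mod p" by (simp add: mod_mult_right_eq)
    then show "y \<in> B" using pw by simp
  qed
qed

end
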